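(* Let sampling data $\{(\mathrm{i}\omega_i, H_i)\}_{i=1}^{N}$ be given, with $\omega_i \in \mathbb{R}$ and $H_i \in \mathbb{C}^{n_o \times n_i}$, closed under conjugation (if $\mathrm{i}\omega_k$ is a sampling frequency then so is $-\mathrm{i}\omega_k$, and the datum at $-\mathrm{i}\omega_k$ is $\overline{H_k}$), and weights $\rho_i > 0$ that are equal for complex conjugate pairs of sampling frequencies. For real matrices $\hat{E}, \hat{A} \in \mathbb{R}^{r\times r}$, $\hat{B} \in \mathbb{R}^{r \times n_i}$, $\hat{C} \in \mathbb{R}^{n_o \times r}$ let $\hat{H}(s) = \hat{C}(s\hat{E} - \hat{A})^{-1}\hat{B}$ and $\mathcal{J}(\hat{H}) = \sum_{i=1}^{N} \rho_i \|H_i - \hat{H}(\mathrm{i}\omega_i)\|_F^2$. Let $\hat{H}$ have the pole-residue form $\hat{H}(s) = \sum_{j=1}^{r} \frac{c_j b_j^{*}}{s - \lambda_j}$ with pairwise distinct poles $\lambda_j$ (where $c_j = \hat{C}\hat{T}e_j$, $b_j = \hat{B}^{T}\hat{S}e_j$ for invertible $\hat{T},\hat{S} \in \mathbb{C}^{r\times r}$ with $\hat{S}^*\hat{E}\hat{T} = I$ and $\hat{S}^*\hat{A}\hat{T} = \operatorname{diag}(\lambda_1,\dots,\lambda_r)$), and let $\hat{H}$ be a local minimum of $\mathcal{J}$. Then for $k = 1, \dots, r$: \begin{align*} \sum_{i=1}^{N} \rho_i \frac{H_i b_k}{-\mathrm{i}\omega_i - \overline{\lambda_k}} &= \sum_{i=1}^{N}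 \rho_i \frac{\hat{H}(\mathrm{i}\omega_i) b_k}{-\mathrm{i}\omega_i - \overline{\lambda_k}},\\ \sum_{i=1}^{N} \rho_i \frac{c_k^{*} H_i}{-\mathrm{i}\omega_i - \overline{\lambda_k}} &= \sum_{i=1}^{N} \rho_i \frac{c_k^{*} \hat{H}(\mathrm{i}\omega_i)}{-\mathrm{i}\omega_i - \overline{\lambda_k}},\\ \sum_{i=1}^{N} \rho_i \frac{c_k^{*} H_i b_k}{(-\mathrm{i}\omega_i - \overline{\lambda_k})^2} &= \sum_{i=1}^{N} \rho_i \frac{c_k^{*} \hat{H}(\mathrm{i}\omega_i) b_k}{(-\mathrm{i}\omega_i - \overline{\lambda_k})^2}. \end{align*}
   Context: $\|\cdot\|_F$ is the Frobenius norm, $(\cdot)^*$ the conjugate transpose, $e_j$ the $j$th standard unit vector. The local minimum is with respect to the real matrices $\hat{E},\hat{A},\hat{B},\hat{C}$ (with $r$ fixed), among those for which $\hat{E}$ is invertible and $\mathrm{i}\omega_i\hat{E} - \hat{A}$ is invertible for all sampling frequencies. *)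

theory Defs
  imports "HOL-Analysis.Analysis"
begin

definition cmat :: "real^'n^'m \<Rightarrow> complex^'n^'m" where
  "cmat M = (\<chi> i j. complex_of_real (M$i$j))"

definition cvconj :: "complex^'n \<Rightarrow> complex^'n" where
  "cvconj v = (\<chi> i. cnj (v$i))"

definition cmconj :: "complex^'n^'m \<Rightarrow> complex^'n^'m" where
  "cmconj M = (\<chi> i j. cnj (M$i$j))"

definition ctrans :: "complex^'n^'m \<Rightarrow> complex^'m^'n" where
  "ctrans M = transpose (cmconj M)"

definition cdot :: "complex^'n \<Rightarrow> complex^'n \<Rightarrow> complex" where
  "cdot x y = (\<Sum>i\<in>UNIV. cnj (x$i) * y$i)"

definition pencil :: "complex \<Rightarrow> real^'r^'r \<Rightarrow> real^'r^'r \<Rightarrow> complex^'r^'r" where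
  "pencil s E A = (\<chi> i j. s * complex_of_real (E$i$j) - complex_of_real (A$i$j))"

definition tf :: "real^'r^'r \<Rightarrow> real^'r^'r \<Rightarrow> real^'ni^'r \<Rightarrow> real^'r^'no
                  \<Rightarrow> complex \<Rightarrow> complex^'ni^'no" where
  "tf E A B C s = cmat C ** matrix_inv (pencil s E A) ** cmat B"

definition frob2 :: "complex^'n^'m \<Rightarrow> real" where
  "frob2 M = (\<Sum>i\<in>UNIV. \<Sum>j\<in>UNIV. (cmod (M$i$j))\<^sup>2)"

definition lsq_obj :: "nat \<Rightarrow> (nat \<Rightarrow> real) \<Rightarrow> (nat \<Rightarrow> real) \<Rightarrow> (nat \<Rightarrow> complex^'ni^'no)
     \<Rightarrow> real^'r^'r \<Rightarrow> real^'r^'r \<Rightarrow> real^'ni^'r \<Rightarrow> real^'r^'no \<Rightarrow> real" where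
  "lsq_obj N \<rho> \<omega> Hd E A B C =
     (\<Sum>i<N. \<rho> i * frob2 (Hd i - tf E A B C (\<i> * complex_of_real (\<omega> i))))"

definition admissible :: "nat \<Rightarrow> (nat \<Rightarrow> real) \<Rightarrow> real^'r^'r \<Rightarrow> real^'r^'r \<Rightarrow> bool" where
  "admissible N \<omega> E A \<longleftrightarrow> invertible E \<and>
     (\<forall>i<N. invertible (pencil (\<i> * complex_of_real (\<omega> i)) E A))"

end

theory Submission
  imports Defs
begin

definition outer :: "complex^'m \<Rightarrow> complex^'n \<Rightarrow> complex^'n^'m" where
  "outer x y = (\<chi> i j. x$i * y$j)"
definition cvec :: "real^'n \<Rightarrow> complex^'n" where
  "cvec u = (\<chi> i. complex_of_real (u$i))"
definition router :: "real^'m \<Rightarrow> real^'n \<Rightarrow> real^'n^'m" where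
  "router u v = (\<chi> i j. u$i * v$j)"
definition pairF :: "complex^'n^'m \<Rightarrow> complex^'n^'m \<Rightarrow> complex" where
  "pairF X Y = (\<Sum>a\<in>UNIV. \<Sum>b\<in>UNIV. cnj (X$a$b) * Y$a$b)"

lemma minv:
  assumes "invertible M"
  shows "M ** matrix_inv M = mat 1" "matrix_inv M ** M = mat 1"
  using someI_ex[OF assms[unfolded invertible_def]] unfolding matrix_inv_def by auto

lemma minv_unique:
  fixes M :: "'a::field^'n^'n"
  assumes "M ** X = mat 1"
  shows "matrix_inv M = X" "invertible M"
proof -
  have X: "X ** M = mat 1" using assms matrix_left_right_inverse by blast
  show inv: "invertible M" using assms X invertible_def by blast
  have "matrix_inv M = matrix_inv M ** (M ** X)" using assms by simp
  also have "\<dots> = X" by (simp add: matrix_mul_assoc minv[OF inv])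
  finally show "matrix_inv M = X" .
qed

lemma cmconj_mult: "cmconj (X ** Y) = cmconj X ** cmconj Y"
  by (simp add: cmconj_def matrix_matrix_mult_def vec_eq_iff)

lemma cmconj_mat1: "cmconj (mat 1) = (mat 1 :: complex^'n^'n)"
  by (simp add: cmconj_def mat_def vec_eq_iff)

lemma cmconj_cmat[simp]: "cmconj (cmat C) = cmat C"
  by (simp add: cmconj_def cmat_def vec_eq_iff)

lemma cmconj_cmconj[simp]: "cmconj (cmconj X) = X"
  by (simp add: cmconj_def vec_eq_iff)

lemma cmconj_diff: "cmconj (X - Y) = cmconj X - cmconj Y"
  by (simp add: cmconj_def vec_eq_iff)

lemma cmconj_minv:
  fixes M :: "complex^'n^'n"
  assumes "invertible M"
  shows "cmconj (matrix_inv M) = matrix_inv (cmconj M)" "invertible (cmconj M)"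
proof -
  have "cmconj M ** cmconj (matrix_inv M) = mat 1"
    by (simp add: cmconj_mult[symmetric] minv[OF assms] cmconj_mat1)
  then show "cmconj (matrix_inv M) = matrix_inv (cmconj M)" "invertible (cmconj M)"
    using minv_unique by metis+
qed

lemma invertible_transpose_gen:
  fixes M :: "'a::field^'n^'n"
  assumes "invertible M" shows "invertible (transpose M)"
proof -
  have "transpose M ** transpose (matrix_inv M) = mat 1"
    by (simp add: matrix_transpose_mul[symmetric] minv[OF assms])
  then show ?thesis using minv_unique by blast
qed

lemma pencil_cnj: "pencil (cnj s) E A = cmconj (pencil s E A)"
  by (simp add: pencil_def cmconj_def vec_eq_iff)

lemma tf_cnj:
  assumes "invertible (pencil s E A)"
  shows "tf E A B C (cnj s) = cmconj (tf E A B C s)"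
  by (simp add: tf_def cmconj_mult pencil_cnj cmconj_minv[OF assms])

lemma mv_smult: "(M::'a::comm_ring_1^'n^'m) *v (c *s v) = c *s (M *v v)"
  by (simp add: vec_eq_iff matrix_vector_mult_def sum_distrib_left mult_ac)

lemma vm_smult: "(c *s v) v* (M::'a::comm_ring_1^'n^'m) = c *s (v v* M)"
  by (simp add: vec_eq_iff vector_matrix_mult_def sum_distrib_left mult_ac)

lemma pencil_mv: "pencil s E A *v x = s *s (cmat E *v x) - cmat A *v x"
  by (simp add: vec_eq_iff matrix_vector_mult_def pencil_def cmat_def sum_subtractf
      sum_distrib_left algebra_simps)

lemma pencil_vm: "x v* pencil s E A = s *s (x v* cmat E) - x v* cmat A"
  by (simp add: vec_eq_iff vector_matrix_mult_def pencil_def cmat_def sum_subtractf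
      sum_distrib_left algebra_simps)

lemma cscale: "t *\<^sub>R (z::complex) = complex_of_real t * z"
  by (simp add: scaleR_conv_of_real)

lemma cmat_add_scale: "cmat (X + t *\<^sub>R Y) = cmat X + t *\<^sub>R cmat Y"
  by (simp add: cmat_def vec_eq_iff cscale)

lemma cmat_router: "cmat (router u v) = outer (cvec u) (cvec v)"
  by (simp add: cmat_def router_def outer_def cvec_def vec_eq_iff)

lemma mult_outer: "M ** outer x y = outer (M *v x) y"
  by (simp add: outer_def matrix_matrix_mult_def matrix_vector_mult_def vec_eq_iff sum_distrib_right sum_distrib_left mult_ac)

lemma outer_mult: "outer x y ** M = outer x (y v* M)"
  by (simp add: outer_def matrix_matrix_mult_def vector_matrix_mult_def vec_eq_iff sum_distrib_left mult_ac)

lemma outer_scaleR: "outer (t *\<^sub>R x) y = t *\<^sub>R outer x y"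
  by (simp add: outer_def vec_eq_iff cscale)

lemma pencil_pert: "pencil s E (A + t *\<^sub>R D) = pencil s E A - t *\<^sub>R cmat D"
  by (simp add: pencil_def cmat_def vec_eq_iff cscale algebra_simps)

lemma cmconj_outer: "cmconj (outer x y) = outer (cvconj x) (cvconj y)"
  by (simp add: cmconj_def cvconj_def outer_def vec_eq_iff)

lemma cvconj_mv: "cvconj (M *v x) = cmconj M *v cvconj x"
  by (simp add: cmconj_def cvconj_def matrix_vector_mult_def vec_eq_iff)

lemma cvconj_vm: "cvconj (x v* M) = cvconj x v* cmconj M"
  by (simp add: cmconj_def cvconj_def vector_matrix_mult_def vec_eq_iff)

lemma cvconj_cvec[simp]: "cvconj (cvec u) = cvec u"
  by (simp add: cvconj_def cvec_def vec_eq_iff)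

lemma cnj_pairF: "cnj (pairF X Y) = pairF (cmconj X) (cmconj Y)"
  by (simp add: pairF_def cmconj_def)

lemma cmod_expand:
  "(cmod (z - t *\<^sub>R w))\<^sup>2 = (cmod z)\<^sup>2 - 2*t*Re (cnj z * w) + t\<^sup>2 * (cmod w)\<^sup>2"
  unfolding cmod_power2 by (simp add: cscale power2_eq_square algebra_simps)

lemma frob2_expand:
  "frob2 (R - t *\<^sub>R Q) = frob2 R - 2*t*Re (pairF R Q) + t\<^sup>2 * frob2 Q"
  by (simp add: frob2_def pairF_def cmod_expand sum.distrib sum_subtractf sum_distrib_left ring_distribs)

lemma crit:
  fixes R :: "nat \<Rightarrow> complex^'n^'m" and Q :: "nat \<Rightarrow> real \<Rightarrow> complex^'n^'m"
  assumes ev: "eventually (\<lambda>t. (\<Sum>i<N. \<rho> i * frob2 (R i)) \<le> (\<Sum>i<N. \<rho> i * frob2 (R i - t *\<^sub>R Q i t))) (at 0)"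
  and cont: "\<And>i a b. i<N \<Longrightarrow> ((\<lambda>t. Q i t $ a $ b) \<longlongrightarrow> Q i 0 $ a $ b) (at 0)"
  shows "(\<Sum>i<N. \<rho> i * Re (pairF (R i) (Q i 0))) = 0"
proof -
  define g where "g t = (\<Sum>i<N. \<rho> i * Re (pairF (R i) (Q i t)))" for t
  define h where "h t = (\<Sum>i<N. \<rho> i * frob2 (Q i t))" for t
  have F: "(\<Sum>i<N. \<rho> i * frob2 (R i - t *\<^sub>R Q i t)) = (\<Sum>i<N. \<rho> i * frob2 (R i)) - 2*t*g t + t\<^sup>2 * h t" for t
    by (simp add: frob2_expand g_def h_def algebra_simps sum.distrib sum_subtractf sum_distrib_left)
  have ev2: "eventually (\<lambda>t. 2*t*g t \<le> t\<^sup>2 * h t) (at 0)"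
    using ev by eventually_elim (simp add: F)
  have gt: "(g \<longlongrightarrow> g 0) (at 0)"
    unfolding g_def pairF_def using cont
    by (auto intro!: tendsto_sum tendsto_mult_left tendsto_Re tendsto_add tendsto_Im)
  have ht: "(h \<longlongrightarrow> h 0) (at 0)"
    unfolding h_def frob2_def using cont
    by (auto intro!: tendsto_sum tendsto_mult_left tendsto_power tendsto_norm)
  have t1: "((\<lambda>t. 2 * g t) \<longlongrightarrow> 2 * g 0) F" if "F \<le> at 0" for F
    using gt that by (auto intro!: tendsto_intros intro: tendsto_mono)
  have t2: "((\<lambda>t. t * h t) \<longlongrightarrow> 0) F" if "F \<le> at 0" for F
  proof -
    have "((\<lambda>t. t * h t) \<longlongrightarrow> 0 * h 0) (at 0)"
      by (intro tendsto_intros ht)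
    then show ?thesis using that by (auto intro: tendsto_mono)
  qed
  from ev2 have evr: "eventually (\<lambda>t. 2*t*g t \<le> t\<^sup>2 * h t) (at_right 0)"
    and evl: "eventually (\<lambda>t. 2*t*g t \<le> t\<^sup>2 * h t) (at_left 0)"
    using eventually_at_split by blast+
  have "eventually (\<lambda>t. 2 * g t \<le> t * h t) (at_right (0::real))"
    using evr eventually_at_right_less
  proof eventually_elim
    case (elim t)
    then have "t * (2 * g t) \<le> t * (t * h t)" by (simp add: power2_eq_square mult_ac)
    then show ?case using elim by simp
  qed
  then have le: "2 * g 0 \<le> 0"
    using tendsto_le[OF trivial_limit_at_right_real t2[of "at_right 0"] t1[of "at_right 0"]]
    by (simp add: at_within_le_at)
  have neg: "eventually (\<lambda>t. t < 0) (at_left (0::real))"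
    by (simp add: eventually_at_filter)
  have "eventually (\<lambda>t. t * h t \<le> 2 * g t) (at_left (0::real))"
    using evl neg
  proof eventually_elim
    case (elim t)
    then have "t * (2 * g t) \<le> t * (t * h t)" by (simp add: power2_eq_square mult_ac)
    then show ?case using elim by (simp add: mult_le_cancel_left)
  qed
  then have ge: "0 \<le> 2 * g 0"
    using tendsto_le[OF trivial_limit_at_left_real t1[of "at_left 0"] t2[of "at_left 0"]]
    by (simp add: at_within_le_at)
  from le ge show ?thesis by (simp add: g_def)
qed

definition Zg :: "nat \<Rightarrow> (nat\<Rightarrow>real) \<Rightarrow> (nat \<Rightarrow> complex^'n^'m) \<Rightarrow> (nat \<Rightarrow> complex^'a^'m)
    \<Rightarrow> (nat \<Rightarrow> complex^'n^'b) \<Rightarrow> complex^'a \<Rightarrow> complex^'b \<Rightarrow> complex" where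
  "Zg N \<rho> R P Q u w = (\<Sum>i<N. complex_of_real (\<rho> i) * pairF (R i) (outer (P i *v u) (w v* Q i)))"

lemma pairF_lin1: "pairF R (outer (P *v (u1 + c *s u2)) q) = pairF R (outer (P *v u1) q) + c * pairF R (outer (P *v u2) q)"
  by (simp add: pairF_def outer_def matrix_vector_mult_def sum.distrib sum_distrib_left algebra_simps)

lemma pairF_lin2: "pairF R (outer p ((w1 + c *s w2) v* Q)) = pairF R (outer p (w1 v* Q)) + c * pairF R (outer p (w2 v* Q))"
  by (simp add: pairF_def outer_def vector_matrix_mult_def sum.distrib sum_distrib_left algebra_simps)

lemma Zg_lin1: "Zg N \<rho> R P Q (u1 + c *s u2) w = Zg N \<rho> R P Q u1 w + c * Zg N \<rho> R P Q u2 w"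
  unfolding Zg_def pairF_lin1 by (simp add: sum.distrib sum_distrib_left algebra_simps)

lemma Zg_lin2: "Zg N \<rho> R P Q u (w1 + c *s w2) = Zg N \<rho> R P Q u w1 + c * Zg N \<rho> R P Q u w2"
  unfolding Zg_def pairF_lin2 by (simp add: sum.distrib sum_distrib_left algebra_simps)

lemma vec_decomp: "u = cvec (\<chi> a. Re (u$a)) + \<i> *s cvec (\<chi> a. Im (u$a))"
  by (simp add: vec_eq_iff cvec_def complex_eq_iff)

lemma complexify:
  fixes R :: "nat \<Rightarrow> complex^'n^'m" and P :: "nat \<Rightarrow> complex^'a^'m" and Q :: "nat \<Rightarrow> complex^'n^'b"
  assumes re0: "\<And>u v. Re (Zg N \<rho> R P Q (cvec u) (cvec v)) = 0"
    and s1: "\<And>i. i<N \<Longrightarrow> \<sigma> i < N" and s2: "\<And>i. i<N \<Longrightarrow> \<sigma> (\<sigma> i) = i"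
    and s3: "\<And>i. i<N \<Longrightarrow> \<rho> (\<sigma> i) = \<rho> i"
    and s4: "\<And>i. i<N \<Longrightarrow> R (\<sigma> i) = cmconj (R i)"
    and s5: "\<And>i. i<N \<Longrightarrow> P (\<sigma> i) = cmconj (P i)"
    and s6: "\<And>i. i<N \<Longrightarrow> Q (\<sigma> i) = cmconj (Q i)"
  shows "Zg N \<rho> R P Q u w = 0"
proof -
  have real0: "Zg N \<rho> R P Q (cvec u) (cvec v) = 0" for u v
  proof -
    define f where "f i = complex_of_real (\<rho> i) * pairF (R i) (outer (P i *v cvec u) (cvec v v* Q i))" for i
    have "cnj (Zg N \<rho> R P Q (cvec u) (cvec v)) = (\<Sum>i<N. f (\<sigma> i))"
      unfolding Zg_def f_def cnj_sum
      by (intro sum.cong refl)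
        (simp add: cnj_pairF cmconj_outer cvconj_mv cvconj_vm s1 s2 s3 s4 s5 s6)
    also have "\<dots> = (\<Sum>i<N. f i)"
      by (rule sum.reindex_bij_witness[where i=\<sigma> and j=\<sigma>]) (auto simp: s1 s2)
    also have "\<dots> = Zg N \<rho> R P Q (cvec u) (cvec v)" by (simp add: Zg_def f_def)
    finally have "cnj (Zg N \<rho> R P Q (cvec u) (cvec v)) = Zg N \<rho> R P Q (cvec u) (cvec v)" .
    then have "Im (Zg N \<rho> R P Q (cvec u) (cvec v)) = 0"
      by (metis complex_cnj_cancel_iff complex_cnj_minus complex_eq_iff cnj.sel(2) neg_equal_zero)
    then show ?thesis using re0[of u v] by (simp add: complex_eq_iff)
  qed
  show ?thesis
    apply (subst vec_decomp[of u])
    apply (subst vec_decomp[of w])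
    by (simp add: Zg_lin1 Zg_lin2 real0)
qed

lemma vm_outer: "w v* outer y z = (\<Sum>j\<in>UNIV. w$j * y$j) *s z"
  by (simp add: outer_def vector_matrix_mult_def vec_eq_iff sum_distrib_right sum_distrib_left mult_ac)

lemma matrix_diff_rdistrib: "((A::'a::ring_1^'n^'m) - B) ** C = A ** C - B ** C"
  by (simp add: vec_eq_iff matrix_matrix_mult_def sum_subtractf algebra_simps)

lemma matrix_diff_ldistrib: "(A::'a::ring_1^'n^'m) ** (B - C) = A ** B - A ** C"
  by (simp add: vec_eq_iff matrix_matrix_mult_def sum_subtractf algebra_simps)

lemma matrix_add_rdistrib: "((A::'a::semiring_1^'n^'m) + B) ** C = A ** C + B ** C"
  by (simp add: vec_eq_iff matrix_matrix_mult_def sum.distrib algebra_simps)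

lemma rank1_inv:
  fixes P K :: "complex^'n^'n"
  assumes PK: "P ** K = mat 1" and al: "1 - (\<Sum>j\<in>UNIV. w$j * (K *v x)$j) \<noteq> 0"
  shows "(P - outer x w) ** (K + outer ((1 / (1 - (\<Sum>j\<in>UNIV. w$j * (K *v x)$j))) *s (K *v x)) (w v* K)) = mat 1"
proof -
  define \<alpha> where "\<alpha> = (\<Sum>j\<in>UNIV. w$j * (K *v x)$j)"
  define c where "c = 1 / (1 - \<alpha>)"
  have c: "c * (1 - \<alpha>) = 1" using al by (simp add: c_def \<alpha>_def)
  have PKx: "P *v (K *v x) = x" by (simp add: matrix_vector_mul_assoc PK)
  define Mo where "Mo = outer (c *s (K *v x)) (w v* K)"
  have e1: "(P - outer x w) ** (K + Mo) = P ** K + P ** Mo - outer x w ** K - outer x w ** Mo"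
    unfolding matrix_diff_rdistrib matrix_add_ldistrib by (simp add: algebra_simps)
  have e2: "P ** Mo = outer (c *s x) (w v* K)"
    unfolding Mo_def mult_outer mv_smult PKx by (rule refl)
  have e3: "outer x w ** K = outer x (w v* K)" by (rule outer_mult)
  have e4: "outer x w ** Mo = outer x ((\<alpha> * c) *s (w v* K))"
    unfolding Mo_def outer_mult vm_outer
    by (simp add: \<alpha>_def mv_smult vector_smult_assoc mult.commute sum_distrib_left mult.left_commute)
  have "(P - outer x w) ** (K + outer (c *s (K *v x)) (w v* K))
      = P ** K + outer (c *s x) (w v* K) - outer x (w v* K) - outer x ((\<alpha> * c) *s (w v* K))"
    using e1 e2 e3 e4 by (simp add: Mo_def)
  also have "\<dots> = mat 1"
  proof -
    have h: "c * a * b - a * b - a * (\<alpha> * c * b) = 0" for a b :: complex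
    proof -
      have "c * a * b - a * b - a * (\<alpha> * c * b) = (c * (1 - \<alpha>) - 1) * (a * b)" by (simp add: algebra_simps)
      then show ?thesis using c by simp
    qed
    have "outer (c *s x) (w v* K) - outer x (w v* K) - outer x ((\<alpha> * c) *s (w v* K)) = 0"
      unfolding outer_def vec_eq_iff using h by simp
    then show ?thesis using PK by (metis (no_types, lifting) add_diff_eq diff_diff_eq add_0_right diff_add_cancel)
  qed
  finally show ?thesis by (simp add: c_def \<alpha>_def)
qed

lemma mult_if0: "x * (if P then y else 0) = (if P then x * y else (0::'a::mult_zero))"
  by simp
lemma if0_mult: "(if P then y else 0) * x = (if P then y * x else (0::'a::mult_zero))"
  by simp

lemma mv_axis: "(M::'a::comm_ring_1^'n^'m) *v axis k 1 = column k M"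
proof -
  have "(\<Sum>j\<in>UNIV. M$i$j * (axis k 1 $ j)) = (\<Sum>j\<in>UNIV. if j = k then M$i$j else 0)" for i
    by (rule sum.cong) (auto simp: axis_def)
  then show ?thesis by (simp add: vec_eq_iff matrix_vector_mult_def column_def)
qed

lemma vm_axis: "axis k 1 v* (M::'a::comm_ring_1^'n^'m) = M $ k"
  by (simp add: vec_eq_iff vector_matrix_mult_def axis_def mult_if0 if0_mult)

lemma diag_axis: "(\<chi> i j. if i = j then lam i else 0) *v axis k 1 = lam k *s axis k (1::complex)"
  by (simp add: vec_eq_iff matrix_vector_mult_def axis_def mult_if0 if0_mult)

lemma axis_diag: "axis k (1::complex) v* (\<chi> i j. if i = j then lam i else 0) = lam k *s axis k 1"
  by (simp add: vec_eq_iff vector_matrix_mult_def axis_def mult_if0 if0_mult)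

lemma ctrans_row: "ctrans S $ k = cvconj (column k S)"
  by (simp add: ctrans_def transpose_def cmconj_def cvconj_def column_def vec_eq_iff)

lemma inv_mv_zero:
  fixes M :: "'a::field^'n^'n"
  assumes "invertible M" "M *v z = 0" shows "z = 0"
proof -
  have "z = matrix_inv M *v (M *v z)" by (simp add: matrix_vector_mul_assoc minv(2)[OF assms(1)])
  then show ?thesis using assms(2) by simp
qed

lemma inv_vm_zero:
  fixes M :: "'a::field^'n^'n"
  assumes "invertible M" "z v* M = 0" shows "z = 0"
proof -
  have z0: "0 v* (matrix_inv M) = 0" by (simp add: vector_matrix_mult_def vec_eq_iff)
  have "z = (z v* M) v* matrix_inv M" by (simp add: vector_matrix_mul_assoc minv(1)[OF assms(1)])
  also have "\<dots> = 0" by (simp only: assms(2) z0)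
  finally show ?thesis .
qed

lemma eig:
  fixes E A :: "real^'r^'r" and T S :: "complex^'r^'r" and lam :: "'r \<Rightarrow> complex"
  assumes T_inv: "invertible T" and S_inv: "invertible S"
    and SET: "ctrans S ** cmat E ** T = mat 1"
    and SAT: "ctrans S ** cmat A ** T = (\<chi> i j. if i = j then lam i else 0)"
  shows "cmat A *v column k T = lam k *s (cmat E *v column k T)"
    and "cvconj (column k S) v* cmat A = lam k *s (cvconj (column k S) v* cmat E)"
    and "column k T \<noteq> 0"
proof -
  have Sc: "invertible (ctrans S)"
    unfolding ctrans_def by (intro invertible_transpose_gen cmconj_minv(2) S_inv)
  let ?x = "column k T" and ?y = "cvconj (column k S)"
  have 1: "ctrans S *v (cmat E *v ?x) = axis k 1"
  proof -
    have "ctrans S *v (cmat E *v (T *v axis k 1)) = (ctrans S ** cmat E ** T) *v axis k 1"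
      by (simp only: matrix_vector_mul_assoc matrix_mul_assoc)
    also have "\<dots> = axis k 1" by (simp only: SET matrix_vector_mul_lid)
    finally show ?thesis by (simp only: mv_axis)
  qed
  have 2: "ctrans S *v (cmat A *v ?x) = lam k *s axis k 1"
  proof -
    have "ctrans S *v (cmat A *v (T *v axis k 1)) = (ctrans S ** cmat A ** T) *v axis k 1"
      by (simp only: matrix_vector_mul_assoc matrix_mul_assoc)
    also have "\<dots> = lam k *s axis k 1" by (simp only: SAT diag_axis)
    finally show ?thesis by (simp only: mv_axis)
  qed
  have "ctrans S *v (cmat A *v ?x - lam k *s (cmat E *v ?x)) = 0"
    by (simp add: matrix_vector_mult_diff_distrib mv_smult 1 2)
  then show "cmat A *v ?x = lam k *s (cmat E *v ?x)"
    using inv_mv_zero[OF Sc] by (metis right_minus_eq)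
  have 3: "(?y v* cmat E) v* T = axis k 1"
  proof -
    have "((axis k 1 v* ctrans S) v* cmat E) v* T = axis k 1 v* (ctrans S ** cmat E ** T)"
      by (simp only: vector_matrix_mul_assoc matrix_mul_assoc)
    also have "\<dots> = axis k 1" by (simp only: SET vector_matrix_mul_rid)
    finally show ?thesis by (simp only: vm_axis ctrans_row)
  qed
  have 4: "(?y v* cmat A) v* T = lam k *s axis k 1"
  proof -
    have "((axis k 1 v* ctrans S) v* cmat A) v* T = axis k 1 v* (ctrans S ** cmat A ** T)"
      by (simp only: vector_matrix_mul_assoc matrix_mul_assoc)
    also have "\<dots> = lam k *s axis k 1" by (simp only: SAT axis_diag)
    finally show ?thesis by (simp only: vm_axis ctrans_row)
  qed
  have "(?y v* cmat A - lam k *s (?y v* cmat E)) v* T = 0"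
    by (simp add: vector_matrix_mult_diff_distrib vm_smult 3 4)
  then show "?y v* cmat A = lam k *s (?y v* cmat E)"
    using inv_vm_zero[OF T_inv] by (metis right_minus_eq)
  show "?x \<noteq> 0"
  proof
    assume "?x = 0"
    then have "T *v axis k 1 = 0" by (simp add: mv_axis)
    then have "axis k (1::complex) = 0" using inv_mv_zero[OF T_inv] by blast
    then show False by (metis axis_nth zero_index zero_neq_one)
  qed
qed

lemma scaleR_smult: "t *\<^sub>R (x::complex^'n) = complex_of_real t *s x"
  by (simp add: vec_eq_iff cscale)

lemma scaleR_mv: "(t *\<^sub>R (M::complex^'n^'m)) *v x = t *\<^sub>R (M *v x)"
  by (simp add: vec_eq_iff matrix_vector_mult_def cscale sum_distrib_left mult_ac)

lemma tfB: "tf E A (B + t *\<^sub>R router u v) C s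
   = tf E A B C s + t *\<^sub>R outer (cmat C ** matrix_inv (pencil s E A) *v cvec u) (cvec v)"
  unfolding tf_def cmat_add_scale cmat_router matrix_add_ldistrib matrix_scalar_ac mult_outer
  by (simp add: matrix_vector_mul_assoc scaleR_mv outer_scaleR)

lemma tfC: "tf E A B (C + t *\<^sub>R router u v) s
   = tf E A B C s + t *\<^sub>R outer (cvec u) (cvec v v* (matrix_inv (pencil s E A) ** cmat B))"
  unfolding tf_def cmat_add_scale cmat_router matrix_add_rdistrib
  by (simp add: scalar_matrix_assoc[symmetric] outer_mult matrix_mul_assoc vector_matrix_mul_assoc)

lemma tfA:
  fixes E A :: "real^'r^'r" and s :: complex and u v :: "real^'r" and t :: real
  defines "K \<equiv> matrix_inv (pencil s E A)"
  defines "\<alpha> \<equiv> (\<Sum>j\<in>UNIV. cvec v $ j * (K *v cvec u) $ j)"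
  assumes inv: "invertible (pencil s E A)" and ne: "1 - complex_of_real t * \<alpha> \<noteq> 0"
  shows "invertible (pencil s E (A + t *\<^sub>R router u v))"
    and "tf E (A + t *\<^sub>R router u v) B C s = tf E A B C s + t *\<^sub>R outer ((1 / (1 - complex_of_real t * \<alpha>)) *s (cmat C ** K *v cvec u)) (cvec v v* (K ** cmat B))"
proof -
  let ?P = "pencil s E A"
  have P': "pencil s E (A + t *\<^sub>R router u v) = ?P - outer (t *\<^sub>R cvec u) (cvec v)"
    by (simp add: pencil_pert cmat_router outer_scaleR)
  have Ktu: "K *v (t *\<^sub>R cvec u) = t *\<^sub>R (K *v cvec u)"
    by (simp add: scaleR_smult mv_smult)
  have al: "(\<Sum>j\<in>UNIV. cvec v $ j * (K *v (t *\<^sub>R cvec u)) $ j) = complex_of_real t * \<alpha>"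
    unfolding Ktu \<alpha>_def by (simp add: cscale sum_distrib_left mult_ac)
  define K' where "K' = K + outer ((1 / (1 - complex_of_real t * \<alpha>)) *s (K *v (t *\<^sub>R cvec u))) (cvec v v* K)"
  have "pencil s E (A + t *\<^sub>R router u v) ** K' = mat 1"
    unfolding P' K'_def
    using rank1_inv[of ?P K "cvec v" "t *\<^sub>R cvec u"] minv(1)[OF inv] ne al
    by (simp add: K_def)
  then have mi: "matrix_inv (pencil s E (A + t *\<^sub>R router u v)) = K'"
    and "invertible (pencil s E (A + t *\<^sub>R router u v))"
    using minv_unique by blast+
  then show "invertible (pencil s E (A + t *\<^sub>R router u v))" by simp
  have e: "cmat C *v ((1 / (1 - complex_of_real t * \<alpha>)) *s (K *v (t *\<^sub>R cvec u)))
      = t *\<^sub>R ((1 / (1 - complex_of_real t * \<alpha>)) *s (cmat C ** K *v cvec u))"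
    by (simp add: Ktu scaleR_smult mv_smult vector_smult_assoc matrix_vector_mul_assoc mult.commute)
  show "tf E (A + t *\<^sub>R router u v) B C s = tf E A B C s + t *\<^sub>R outer ((1 / (1 - complex_of_real t * \<alpha>)) *s (cmat C ** K *v cvec u)) (cvec v v* (K ** cmat B))"
    unfolding tf_def mi K'_def matrix_add_ldistrib matrix_add_rdistrib mult_outer outer_mult e outer_scaleR
    by (simp add: K_def vector_matrix_mul_assoc scalar_matrix_assoc[symmetric] outer_mult)
qed

lemma distB: "dist (E, A, B + t *\<^sub>R D, C) (E, A, B, C) = \<bar>t\<bar> * norm D"
  by (simp add: dist_Pair_Pair dist_norm)
lemma distC: "dist (E, A, B, C + t *\<^sub>R D) (E, A, B, C) = \<bar>t\<bar> * norm D"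
  by (simp add: dist_Pair_Pair dist_norm)
lemma distA: "dist (E, A + t *\<^sub>R D, B, C) (E, A, B, C) = \<bar>t\<bar> * norm D"
  by (simp add: dist_Pair_Pair dist_norm)

lemma ev_small: "\<epsilon> > 0 \<Longrightarrow> eventually (\<lambda>t. \<bar>t\<bar> * (c::real) < \<epsilon>) (at (0::real))"
proof -
  assume "\<epsilon> > 0"
  have "((\<lambda>t. \<bar>t\<bar> * c) \<longlongrightarrow> \<bar>0\<bar> * c) (at (0::real))" by (intro tendsto_intros)
  then show ?thesis using \<open>\<epsilon> > 0\<close> order_tendstoD(2) by fastforce
qed

lemma pairF_axis_left: "pairF R (outer (axis j 1) (a *s cvconj q)) = a * cnj ((R *v q) $ j)"
proof -
  have "pairF R (outer (axis j 1) (a *s cvconj q))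
     = (\<Sum>x\<in>UNIV. if x = j then (\<Sum>y\<in>UNIV. cnj (R$x$y) * (a * cnj (q$y))) else 0)"
    unfolding pairF_def outer_def by (intro sum.cong) (auto simp: axis_def cvconj_def)
  also have "\<dots> = a * cnj ((R *v q) $ j)"
    by (simp add: matrix_vector_mult_def sum_distrib_left mult_ac)
  finally show ?thesis .
qed
lemma pairF_axis_right: "pairF R (outer (a *s p) (axis j 1)) = a * cnj ((cvconj p v* R) $ j)"
proof -
  have "pairF R (outer (a *s p) (axis j 1))
     = (\<Sum>x\<in>UNIV. (\<Sum>y\<in>UNIV. if y = j then cnj (R$x$y) * (a * p$x) else 0))"
    unfolding pairF_def outer_def by (intro sum.cong) (auto simp: axis_def)
  also have "\<dots> = a * cnj ((cvconj p v* R) $ j)"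
    by (simp add: vector_matrix_mult_def sum_distrib_left mult_ac cvconj_def)
  finally show ?thesis .
qed
lemma pairF_both: "pairF R (outer (a *s p) (a' *s cvconj q)) = a * a' * cnj (cdot p (R *v q))"
  by (simp add: pairF_def outer_def cdot_def cvconj_def matrix_vector_mult_def sum_distrib_left mult_ac)

lemma cdot_diff: "cdot c (X - Y) = cdot c X - cdot c Y"
  by (simp add: cdot_def sum_subtractf right_diff_distrib)

theorem theorem4p1:
  fixes N :: nat
    and \<omega> :: "nat \<Rightarrow> real" and \<rho> :: "nat \<Rightarrow> real"
    and Hd :: "nat \<Rightarrow> complex^'ni^'no"
    and E A :: "real^'r^'r" and B :: "real^'ni^'r" and C :: "real^'r^'no"
    and T S :: "complex^'r^'r" and lam :: "'r \<Rightarrow> complex"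
  assumes distinct_freq: "inj_on \<omega> {..<N}"
    and conj_closed: "\<forall>k<N. \<exists>l<N. \<omega> l = - \<omega> k \<and> Hd l = cmconj (Hd k)"
    and rho_pos: "\<forall>i<N. \<rho> i > 0"
    and rho_sym: "\<forall>k<N. \<forall>l<N. \<omega> l = - \<omega> k \<longrightarrow> \<rho> l = \<rho> k"
    and T_inv: "invertible T" and S_inv: "invertible S"
    and SET: "ctrans S ** cmat E ** T = mat 1"
    and SAT: "ctrans S ** cmat A ** T = (\<chi> i j. if i = j then lam i else 0)"
    and poles_distinct: "inj lam"
    and adm: "admissible N \<omega> E A"
    and locmin: "\<exists>\<epsilon>>0. \<forall>E' A' B' C'.
                   admissible N \<omega> E' A' \<and> dist (E', A', B', C') (E, A, B, C) < \<epsilon> \<longrightarrow>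
                   lsq_obj N \<rho> \<omega> Hd E A B C \<le> lsq_obj N \<rho> \<omega> Hd E' A' B' C'"
  shows "\<forall>k.
     let c = cmat C *v column k T;
         b = transpose (cmat B) *v column k S;
         Hh = tf E A B C;
         d = (\<lambda>i. - \<i> * complex_of_real (\<omega> i) - cnj (lam k))
     in (\<Sum>i<N. (complex_of_real (\<rho> i) / d i) *s (Hd i *v b))
          = (\<Sum>i<N. (complex_of_real (\<rho> i) / d i) *s (Hh (\<i> * complex_of_real (\<omega> i)) *v b))
      \<and> (\<Sum>i<N. (complex_of_real (\<rho> i) / d i) *s (cvconj c v* Hd i))
          = (\<Sum>i<N. (complex_of_real (\<rho> i) / d i) *s (cvconj c v* Hh (\<i> * complex_of_real (\<omega> i))))
      \<and> (\<Sum>i<N. complex_of_real (\<rho> i) * cdot c (Hd i *v b) / (d i)\<^sup>2)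
          = (\<Sum>i<N. complex_of_real (\<rho> i) * cdot c (Hh (\<i> * complex_of_real (\<omega> i)) *v b) / (d i)\<^sup>2)"
proof -
  obtain \<epsilon> where epos: "\<epsilon> > 0" and lm: "\<And>E' A' B' C'. admissible N \<omega> E' A' \<Longrightarrow>
      dist (E', A', B', C') (E, A, B, C) < \<epsilon> \<Longrightarrow>
      lsq_obj N \<rho> \<omega> Hd E A B C \<le> lsq_obj N \<rho> \<omega> Hd E' A' B' C'"
    using locmin by blast
  define s where "s i = \<i> * complex_of_real (\<omega> i)" for i
  define K where "K i = matrix_inv (pencil (s i) E A)" for i
  define Hh where "Hh i = tf E A B C (s i)" for i
  define R where "R i = Hd i - Hh i" for i
  have Pinv: "invertible (pencil (s i) E A)" if "i < N" for i
    using adm that by (simp add: admissible_def s_def)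
  have invE: "invertible E" using adm by (simp add: admissible_def)
  have J0: "lsq_obj N \<rho> \<omega> Hd E A B C = (\<Sum>i<N. \<rho> i * frob2 (R i))"
    by (simp add: lsq_obj_def R_def Hh_def s_def)
  have "\<forall>k. \<exists>l. k < N \<longrightarrow> l < N \<and> \<omega> l = - \<omega> k \<and> Hd l = cmconj (Hd k)"
    using conj_closed by blast
  then obtain \<sigma> where \<sigma>: "\<And>k. k < N \<Longrightarrow> \<sigma> k < N \<and> \<omega> (\<sigma> k) = - \<omega> k \<and> Hd (\<sigma> k) = cmconj (Hd k)"
    by metis
  have s1: "\<sigma> i < N" if "i < N" for i using \<sigma> that by blast
  have s2: "\<sigma> (\<sigma> i) = i" if "i < N" for i
  proof -
    have "\<omega> (\<sigma> (\<sigma> i)) = \<omega> i" using \<sigma> s1 that by simp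
    then show ?thesis using distinct_freq s1 that by (meson inj_onD lessThan_iff)
  qed
  have s3: "\<rho> (\<sigma> i) = \<rho> i" if "i < N" for i using rho_sym \<sigma> s1 that by blast
  have ss: "s (\<sigma> i) = cnj (s i)" if "i < N" for i using \<sigma> that by (simp add: s_def)
  have sK: "K (\<sigma> i) = cmconj (K i)" if "i < N" for i
    using that by (simp add: K_def ss pencil_cnj cmconj_minv(1)[OF Pinv[OF that], symmetric])
  have sHh: "Hh (\<sigma> i) = cmconj (Hh i)" if "i < N" for i
    using that by (simp add: Hh_def ss tf_cnj Pinv)
  have sR: "R (\<sigma> i) = cmconj (R i)" if "i < N" for i
    using that \<sigma> by (simp add: R_def sHh cmconj_diff)
  have ZB: "Zg N \<rho> R (\<lambda>i. cmat C ** K i) (\<lambda>i. mat 1) u w = 0" for u w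
  proof (rule complexify[where \<sigma>=\<sigma>])
    fix u :: "real^'r" and v :: "real^'ni"
    define Q where "Q i (t::real) = outer (cmat C ** K i *v cvec u) (cvec v)" for i t
    have ev: "eventually (\<lambda>t. (\<Sum>i<N. \<rho> i * frob2 (R i)) \<le> (\<Sum>i<N. \<rho> i * frob2 (R i - t *\<^sub>R Q i t))) (at 0)"
      using ev_small[OF epos, of "norm (router u v)"]
    proof eventually_elim
      case (elim t)
      have "lsq_obj N \<rho> \<omega> Hd E A B C \<le> lsq_obj N \<rho> \<omega> Hd E A (B + t *\<^sub>R router u v) C"
        using lm[of E A "B + t *\<^sub>R router u v" C] adm elim by (simp add: distB)
      moreover have "lsq_obj N \<rho> \<omega> Hd E A (B + t *\<^sub>R router u v) C = (\<Sum>i<N. \<rho> i * frob2 (R i - t *\<^sub>R Q i t))"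
        unfolding lsq_obj_def
        by (intro sum.cong refl) (simp add: tfB R_def Hh_def K_def s_def Q_def algebra_simps)
      ultimately show ?case using J0 by simp
    qed
    have "(\<Sum>i<N. \<rho> i * Re (pairF (R i) (Q i 0))) = 0"
      by (rule crit[OF ev]) (simp add: Q_def)
    then show "Re (Zg N \<rho> R (\<lambda>i. cmat C ** K i) (\<lambda>i. mat 1) (cvec u) (cvec v)) = 0"
      by (simp add: Zg_def Q_def)
  qed (auto simp: s1 s2 s3 sR sK cmconj_mult cmconj_mat1)
  have ZC: "Zg N \<rho> R (\<lambda>i. mat 1) (\<lambda>i. K i ** cmat B) u w = 0" for u w
  proof (rule complexify[where \<sigma>=\<sigma>])
    fix u :: "real^'no" and v :: "real^'r"
    define Q where "Q i (t::real) = outer (cvec u) (cvec v v* (K i ** cmat B))" for i t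
    have ev: "eventually (\<lambda>t. (\<Sum>i<N. \<rho> i * frob2 (R i)) \<le> (\<Sum>i<N. \<rho> i * frob2 (R i - t *\<^sub>R Q i t))) (at 0)"
      using ev_small[OF epos, of "norm (router u v)"]
    proof eventually_elim
      case (elim t)
      have "lsq_obj N \<rho> \<omega> Hd E A B C \<le> lsq_obj N \<rho> \<omega> Hd E A B (C + t *\<^sub>R router u v)"
        using lm[of E A B "C + t *\<^sub>R router u v"] adm elim by (simp add: distC)
      moreover have "lsq_obj N \<rho> \<omega> Hd E A B (C + t *\<^sub>R router u v) = (\<Sum>i<N. \<rho> i * frob2 (R i - t *\<^sub>R Q i t))"
        unfolding lsq_obj_def
        by (intro sum.cong refl) (simp add: tfC R_def Hh_def K_def s_def Q_def algebra_simps)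
      ultimately show ?case using J0 by simp
    qed
    have "(\<Sum>i<N. \<rho> i * Re (pairF (R i) (Q i 0))) = 0"
      by (rule crit[OF ev]) (simp add: Q_def)
    then show "Re (Zg N \<rho> R (\<lambda>i. mat 1) (\<lambda>i. K i ** cmat B) (cvec u) (cvec v)) = 0"
      by (simp add: Zg_def Q_def)
  qed (auto simp: s1 s2 s3 sR sK cmconj_mult cmconj_mat1)
  have ZA: "Zg N \<rho> R (\<lambda>i. cmat C ** K i) (\<lambda>i. K i ** cmat B) u w = 0" for u w
  proof (rule complexify[where \<sigma>=\<sigma>])
    fix u :: "real^'r" and v :: "real^'r"
    define al where "al i = (\<Sum>j\<in>UNIV. cvec v $ j * (K i *v cvec u) $ j)" for i
    define f where "f i (t::real) = 1 / (1 - complex_of_real t * al i)" for i t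
    define Q where "Q i (t::real) = outer (f i t *s (cmat C ** K i *v cvec u)) (cvec v v* (K i ** cmat B))" for i t
    have evne: "eventually (\<lambda>t. \<forall>i\<in>{..<N}. 1 - complex_of_real t * al i \<noteq> 0) (at 0)"
    proof (rule eventually_ball_finite[OF finite_lessThan], rule ballI)
      fix i
      have "((\<lambda>t. 1 - complex_of_real t * al i) \<longlongrightarrow> 1 - complex_of_real 0 * al i) (at 0)"
        by (intro tendsto_intros)
      then show "eventually (\<lambda>t. 1 - complex_of_real t * al i \<noteq> 0) (at 0)"
        by (rule tendsto_imp_eventually_ne) simp
    qed
    have ev: "eventually (\<lambda>t. (\<Sum>i<N. \<rho> i * frob2 (R i)) \<le> (\<Sum>i<N. \<rho> i * frob2 (R i - t *\<^sub>R Q i t))) (at 0)"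
      using ev_small[OF epos, of "norm (router u v)"] evne
    proof eventually_elim
      case (elim t)
      have inv': "invertible (pencil (s i) E (A + t *\<^sub>R router u v))" if "i < N" for i
        using tfA(1)[where u=u and v=v and t=t, OF Pinv[OF that]] elim that by (simp add: al_def K_def)
      have "admissible N \<omega> E (A + t *\<^sub>R router u v)"
        using invE inv' by (simp add: admissible_def s_def)
      then have "lsq_obj N \<rho> \<omega> Hd E A B C \<le> lsq_obj N \<rho> \<omega> Hd E (A + t *\<^sub>R router u v) B C"
        using lm[of E "A + t *\<^sub>R router u v" B C] elim by (simp add: distA)
      moreover have "lsq_obj N \<rho> \<omega> Hd E (A + t *\<^sub>R router u v) B C = (\<Sum>i<N. \<rho> i * frob2 (R i - t *\<^sub>R Q i t))"
        unfolding lsq_obj_def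
      proof (intro sum.cong refl)
        fix i assume "i \<in> {..<N}"
        then have i: "i < N" by simp
        have "tf E (A + t *\<^sub>R router u v) B C (s i) = Hh i + t *\<^sub>R Q i t"
          using tfA(2)[where u=u and v=v and t=t and B=B and C=C, OF Pinv[OF i]] elim i
          by (simp add: al_def K_def Hh_def Q_def f_def)
        then show "\<rho> i * frob2 (Hd i - tf E (A + t *\<^sub>R router u v) B C (\<i> * complex_of_real (\<omega> i)))
              = \<rho> i * frob2 (R i - t *\<^sub>R Q i t)"
          by (simp add: R_def s_def algebra_simps)
      qed
      ultimately show ?case using J0 by simp
    qed
    have "(\<Sum>i<N. \<rho> i * Re (pairF (R i) (Q i 0))) = 0"
    proof (rule crit[OF ev])
      fix i a b
      have "(f i \<longlongrightarrow> f i 0) (at 0)"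
        unfolding f_def by (intro tendsto_intros) simp
      then show "((\<lambda>t. Q i t $ a $ b) \<longlongrightarrow> Q i 0 $ a $ b) (at 0)"
        unfolding Q_def outer_def by (simp add: mult.assoc) (intro tendsto_intros)
    qed
    then show "Re (Zg N \<rho> R (\<lambda>i. cmat C ** K i) (\<lambda>i. K i ** cmat B) (cvec u) (cvec v)) = 0"
      by (simp add: Zg_def Q_def f_def)
  qed (auto simp: s1 s2 s3 sR sK cmconj_mult cmconj_mat1)
  show ?thesis
  proof (intro allI)
    fix k
    define x where "x = column k T"
    define y where "y = column k S"
    define c where "c = cmat C *v x"
    define b where "b = transpose (cmat B) *v y"
    define d where "d i = - \<i> * complex_of_real (\<omega> i) - cnj (lam k)" for i
    define ex where "ex = cmat E *v x"
    define ey where "ey = cvconj y v* cmat E"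
    have eA: "cmat A *v x = lam k *s ex"
      using eig(1)[OF T_inv S_inv SET SAT] by (simp add: x_def ex_def)
    have eA2: "cvconj y v* cmat A = lam k *s ey"
      using eig(2)[OF T_inv S_inv SET SAT] by (simp add: y_def ey_def)
    have x0: "x \<noteq> 0" using eig(3)[OF T_inv S_inv SET SAT] by (simp add: x_def)
    have Pv: "pencil (s i) E A *v x = (s i - lam k) *s ex" for i
      by (simp add: pencil_mv eA ex_def[symmetric] vec_eq_iff algebra_simps)
    have Pv2: "cvconj y v* pencil (s i) E A = (s i - lam k) *s ey" for i
      by (simp add: pencil_vm eA2 ey_def[symmetric] vec_eq_iff algebra_simps)
    have sne: "s i \<noteq> lam k" if "i < N" for i
    proof
      assume "s i = lam k"
      then have "pencil (s i) E A *v x = 0" using Pv[of i] by (simp del: vector_ssub_ldistrib)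
      then show False using inv_mv_zero[OF Pinv[OF that]] x0 by blast
    qed
    have Kex: "K i *v ex = (1 / (s i - lam k)) *s x" if "i < N" for i
    proof -
      have "x = K i *v (pencil (s i) E A *v x)"
        by (simp add: K_def matrix_vector_mul_assoc minv(2)[OF Pinv[OF that]])
      also have "\<dots> = (s i - lam k) *s (K i *v ex)" by (simp add: Pv mv_smult matrix_vector_mult_diff_distrib)
      finally have "(1 / (s i - lam k)) *s x = (1 / (s i - lam k)) *s ((s i - lam k) *s (K i *v ex))"
        by simp
      moreover have "(1 / (s i - lam k)) * (s i - lam k) = 1" using sne[OF that] by simp
      ultimately show ?thesis by (simp only: vector_smult_assoc vector_smult_lid)
    qed
    have eyK: "ey v* K i = (1 / (s i - lam k)) *s cvconj y" if "i < N" for i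
    proof -
      have "cvconj y = (cvconj y v* pencil (s i) E A) v* K i"
        by (simp add: K_def vector_matrix_mul_assoc minv(1)[OF Pinv[OF that]])
      also have "\<dots> = (s i - lam k) *s (ey v* K i)" by (simp add: Pv2 vm_smult vector_matrix_mult_diff_distrib)
      finally have "(1 / (s i - lam k)) *s cvconj y = (1 / (s i - lam k)) *s ((s i - lam k) *s (ey v* K i))"
        by simp
      moreover have "(1 / (s i - lam k)) * (s i - lam k) = 1" using sne[OF that] by simp
      ultimately show ?thesis by (simp only: vector_smult_assoc vector_smult_lid)
    qed
    have yB: "cvconj y v* cmat B = cvconj b" by (simp add: b_def cvconj_vm)
    have dc: "cnj (d i) = s i - lam k" for i by (simp add: d_def s_def)
    have C1: "(\<Sum>i<N. (complex_of_real (\<rho> i) / d i) *s (Hd i *v b))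
            = (\<Sum>i<N. (complex_of_real (\<rho> i) / d i) *s (Hh i *v b))"
    proof -
      have "cnj ((\<Sum>i<N. (complex_of_real (\<rho> i) / d i) *s (R i *v b)) $ j)
          = Zg N \<rho> R (\<lambda>i. mat 1) (\<lambda>i. K i ** cmat B) (axis j 1) ey" for j
      proof -
        have "cnj ((\<Sum>i<N. (complex_of_real (\<rho> i) / d i) *s (R i *v b)) $ j)
           = (\<Sum>i<N. complex_of_real (\<rho> i) * ((1 / (s i - lam k)) * cnj ((R i *v b) $ j)))"
          by (simp add: dc)
        also have "\<dots> = Zg N \<rho> R (\<lambda>i. mat 1) (\<lambda>i. K i ** cmat B) (axis j 1) ey"
          unfolding Zg_def
          by (intro sum.cong refl) (simp add: vector_matrix_mul_assoc[symmetric] eyK vm_smult yB pairF_axis_left)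
        finally show ?thesis .
      qed
      note cj = this
      have "(\<Sum>i<N. (complex_of_real (\<rho> i) / d i) *s (R i *v b)) $ j = 0" for j
      proof -
        have "cnj ((\<Sum>i<N. (complex_of_real (\<rho> i) / d i) *s (R i *v b)) $ j) = 0" by (simp only: cj ZC)
        then show ?thesis by (simp only: complex_cnj_zero_iff)
      qed
      then have "(\<Sum>i<N. (complex_of_real (\<rho> i) / d i) *s (R i *v b)) = 0" by (simp add: vec_eq_iff)
      moreover have "(\<Sum>i<N. (complex_of_real (\<rho> i) / d i) *s (R i *v b))
          = (\<Sum>i<N. (complex_of_real (\<rho> i) / d i) *s (Hd i *v b)) - (\<Sum>i<N. (complex_of_real (\<rho> i) / d i) *s (Hh i *v b))"
        by (simp add: R_def matrix_vector_mult_diff_rdistrib vector_ssub_ldistrib sum_subtractf)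
      ultimately show ?thesis by simp
    qed
    have C2: "(\<Sum>i<N. (complex_of_real (\<rho> i) / d i) *s (cvconj c v* Hd i))
            = (\<Sum>i<N. (complex_of_real (\<rho> i) / d i) *s (cvconj c v* Hh i))"
    proof -
      have "cnj ((\<Sum>i<N. (complex_of_real (\<rho> i) / d i) *s (cvconj c v* R i)) $ j)
          = Zg N \<rho> R (\<lambda>i. cmat C ** K i) (\<lambda>i. mat 1) ex (axis j 1)" for j
      proof -
        have "cnj ((\<Sum>i<N. (complex_of_real (\<rho> i) / d i) *s (cvconj c v* R i)) $ j)
           = (\<Sum>i<N. complex_of_real (\<rho> i) * ((1 / (s i - lam k)) * cnj ((cvconj c v* R i) $ j)))"
          by (simp add: dc)
        also have "\<dots> = Zg N \<rho> R (\<lambda>i. cmat C ** K i) (\<lambda>i. mat 1) ex (axis j 1)"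
          unfolding Zg_def
          by (intro sum.cong refl) (simp add: matrix_vector_mul_assoc[symmetric] Kex mv_smult c_def[symmetric] pairF_axis_right)
        finally show ?thesis .
      qed
      note cj = this
      have "(\<Sum>i<N. (complex_of_real (\<rho> i) / d i) *s (cvconj c v* R i)) $ j = 0" for j
      proof -
        have "cnj ((\<Sum>i<N. (complex_of_real (\<rho> i) / d i) *s (cvconj c v* R i)) $ j) = 0" by (simp only: cj ZB)
        then show ?thesis by (simp only: complex_cnj_zero_iff)
      qed
      then have "(\<Sum>i<N. (complex_of_real (\<rho> i) / d i) *s (cvconj c v* R i)) = 0" by (simp add: vec_eq_iff)
      moreover have "(\<Sum>i<N. (complex_of_real (\<rho> i) / d i) *s (cvconj c v* R i))
          = (\<Sum>i<N. (complex_of_real (\<rho> i) / d i) *s (cvconj c v* Hd i)) - (\<Sum>i<N. (complex_of_real (\<rho> i) / d i) *s (cvconj c v* Hh i))"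
        by (simp add: R_def vector_matrix_mult_diff_rdistrib vector_ssub_ldistrib sum_subtractf)
      ultimately show ?thesis by simp
    qed
    have C3: "(\<Sum>i<N. complex_of_real (\<rho> i) * cdot c (Hd i *v b) / (d i)\<^sup>2)
            = (\<Sum>i<N. complex_of_real (\<rho> i) * cdot c (Hh i *v b) / (d i)\<^sup>2)"
    proof -
      have "cnj (\<Sum>i<N. complex_of_real (\<rho> i) * cdot c (R i *v b) / (d i)\<^sup>2)
          = Zg N \<rho> R (\<lambda>i. cmat C ** K i) (\<lambda>i. K i ** cmat B) ex ey"
      proof -
        have "cnj (\<Sum>i<N. complex_of_real (\<rho> i) * cdot c (R i *v b) / (d i)\<^sup>2)
           = (\<Sum>i<N. complex_of_real (\<rho> i) * ((1 / (s i - lam k)) * (1 / (s i - lam k)) * cnj (cdot c (R i *v b))))"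
          by (simp add: dc power2_eq_square)
        also have "\<dots> = Zg N \<rho> R (\<lambda>i. cmat C ** K i) (\<lambda>i. K i ** cmat B) ex ey"
          unfolding Zg_def
          by (intro sum.cong refl) (simp add: matrix_vector_mul_assoc[symmetric] Kex mv_smult c_def[symmetric]
               vector_matrix_mul_assoc[symmetric] eyK vm_smult yB pairF_both)
        finally show ?thesis .
      qed
      then have "cnj (\<Sum>i<N. complex_of_real (\<rho> i) * cdot c (R i *v b) / (d i)\<^sup>2) = 0"
        by (simp only: ZA)
      then have "(\<Sum>i<N. complex_of_real (\<rho> i) * cdot c (R i *v b) / (d i)\<^sup>2) = 0"
        by (simp only: complex_cnj_zero_iff)
      moreover have "(\<Sum>i<N. complex_of_real (\<rho> i) * cdot c (R i *v b) / (d i)\<^sup>2)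
          = (\<Sum>i<N. complex_of_real (\<rho> i) * cdot c (Hd i *v b) / (d i)\<^sup>2) - (\<Sum>i<N. complex_of_real (\<rho> i) * cdot c (Hh i *v b) / (d i)\<^sup>2)"
        by (simp add: R_def matrix_vector_mult_diff_rdistrib cdot_diff right_diff_distrib diff_divide_distrib sum_subtractf)
      ultimately show ?thesis by simp
    qed
    show "let c = cmat C *v column k T;
         b = transpose (cmat B) *v column k S;
         Hh = tf E A B C;
         d = (\<lambda>i. - \<i> * complex_of_real (\<omega> i) - cnj (lam k))
     in (\<Sum>i<N. (complex_of_real (\<rho> i) / d i) *s (Hd i *v b))
          = (\<Sum>i<N. (complex_of_real (\<rho> i) / d i) *s (Hh (\<i> * complex_of_real (\<omega> i)) *v b))
      \<and> (\<Sum>i<N. (complex_of_real (\<rho> i) / d i) *s (cvconj c v* Hd i))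
          = (\<Sum>i<N. (complex_of_real (\<rho> i) / d i) *s (cvconj c v* Hh (\<i> * complex_of_real (\<omega> i))))
      \<and> (\<Sum>i<N. complex_of_real (\<rho> i) * cdot c (Hd i *v b) / (d i)\<^sup>2)
          = (\<Sum>i<N. complex_of_real (\<rho> i) * cdot c (Hh (\<i> * complex_of_real (\<omega> i)) *v b) / (d i)\<^sup>2)"
      unfolding Let_def using C1 C2 C3
      by (simp only: c_def b_def x_def y_def d_def Hh_def s_def)
  qed
qed

end
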